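(* Let $f\in\mathcal{F}_{\alpha,\beta}$, let $\epsilon_0>0$ and $\gamma\in\big[(1-\alpha/(d\beta))^{1/2},1\big)$, and let $\{\mathbf{x}^{(k)}\}_{k\ge0}$ be the sequence of CM outputs generated by the PCM algorithm $\Upsilon(\{\epsilon_0\gamma^k\}_{k\in\mathbb{N}},\upsilon,\tau)$ started from the initial point $\mathbf{x}^{(0)}$. Then for all $k\ge0$, $$\mathbb{E}[f(\mathbf{x}^{(k)})-f(\mathbf{x}^* )]\le F_0\gamma^k,\qquad F_0=\max\Big\{f(\mathbf{x}^{(0)})-f(\mathbf{x}^* ),\ \frac{\epsilon_0}{1-\gamma}\Big\}.$$
   Context: The objective is $f(\mathbf{x})=\mathbb{E}_\xi[F(\mathbf{x};\xi)]$ over a convex compact $\mathcal{X}\subset\mathbb{R}^d$, unknown to the learner; $\mathbf{x}^*=\arg\min_{\mathbf{x}\in\mathcal{X}}f(\mathbf{x})$. The class $\mathcal{F}_{\alpha,\beta}$ consists of functions $f=\psi+\phi$ where $\phi(\mathbf{x})=\sum_{i=1}^d\phi_i(\mathbf{x}_i)$ is coordinate-wise separable convex (possibly nonsmooth) and $\psi$ is $\alpha$-strongly convex ($\psi(\mathbf{y})\ge\psi(\mathbf{x})+\langle\nabla\psi(\mathbf{x}),\mathbf{y}-\mathbf{x}\rangle+\frac{\alpha}{2}\|\mathbf{y}-\mathbf{x}\|_2^2$) and $\beta$-smooth ($\|\nabla\psi(\mathbf{x})-\nabla\psi(\mathbf{y})\|\le\beta\|\mathbf{x}-\mathbf{y}\|_2$)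 on $\mathcal{X}$. The learner queries points and coordinates and observes unbiased noisy partial gradients. PCM algorithm $\Upsilon(\{\epsilon_k\},\upsilon,\tau)$: $\upsilon$ is a low-dimensional (one-coordinate) stochastic optimization routine and $\tau$ a termination rule giving, for each $\epsilon>0$, a stopping time $\tau(\epsilon)$ for $\upsilon$ such that the returned point is $\epsilon$-accurate in expectation for the one-dimensional problem being solved. In iteration $k=1,2,\dots$ a coordinate $i_k$ is chosen uniformly at random from $\{1,\dots,d\}$; $\upsilon$ is run on the one-dimensional restriction $x\mapsto f(x,\mathbf{x}^{(k-1)}_{-i_k})$ (all other coordinates fixed at those of $\mathbf{x}^{(k-1)}$), started at $\mathbf{x}^{(k-1)}_{i_k}$, and stopped at $\tau(\epsilon_k)$; $\mathbf{x}^{(k)}$ is $\mathbf{x}^{(k-1)}$ with coordinate $i_k$ replaced by the returned point. Thus, with $\mathbf{x}^*_{(i_k,\mathbf{x}^{(k-1)})}$ the minimizer of $f$ over points agreeing with $\mathbf{x}^{(k-1)}$ off coordinate $i_k$, one has $\mathbb{E}[f(\mathbf{x}^{(k)})\mid\mathbf{x}^{(k-1)},i_k]\le f(\mathbf{x}^*_{(i_k,\mathbf{x}^{(k-1)})})+\epsilon_k$.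
   Formalization: The feasible set $\mathcal{X}$ is a nonempty box, a product of compact intervals, rather than an arbitrary convex compact subset of $\mathbb{R}^d$, throughout the class and the coordinate subproblems. Apart from conventions, each condition added here is assumed in the paper as well or is needed for the statement above to hold. *)

theory Defs
  imports "HOL-Probability.Probability"
begin

definition in_F :: "real \<Rightarrow> real \<Rightarrow> (real^'d) set \<Rightarrow> (real^'d \<Rightarrow> real) \<Rightarrow> bool" where
  "in_F \<alpha> \<beta> S f \<longleftrightarrow>
     (\<exists>(\<psi> :: real^'d \<Rightarrow> real) (gpsi :: real^'d \<Rightarrow> real^'d) (\<phi> :: 'd \<Rightarrow> real \<Rightarrow> real).
        (\<forall>x\<in>S. (\<psi> has_derivative (\<lambda>h. gpsi x \<bullet> h)) (at x within S)) \<and>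
        (\<forall>x\<in>S. \<forall>y\<in>S. \<psi> y \<ge> \<psi> x + gpsi x \<bullet> (y - x) + \<alpha> / 2 * (norm (y - x))\<^sup>2) \<and>
        (\<forall>x\<in>S. \<forall>y\<in>S. norm (gpsi x - gpsi y) \<le> \<beta> * norm (x - y)) \<and>
        (\<forall>i. convex_on ((\<lambda>x. x $ i) ` S) (\<phi> i)) \<and>
        (\<forall>x\<in>S. f x = \<psi> x + (\<Sum>i\<in>UNIV. \<phi> i (x $ i))))"

text \<open>Optimal value of the one-coordinate subproblem: f(x*_{(i,x)}), the minimum of f over
 the points of S agreeing with x off coordinate i (taken as an infimum).\<close>
definition coord_min :: "(real^'d \<Rightarrow> real) \<Rightarrow> (real^'d) set \<Rightarrow> real^'d \<Rightarrow> 'd \<Rightarrow> real" where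
  "coord_min f S x i = Inf (f ` {y \<in> S. \<forall>j. j \<noteq> i \<longrightarrow> y $ j = x $ j})"

end

theory Submission
  imports Defs
begin


lemma descent_lemma:
  fixes \<psi> :: "real^'d \<Rightarrow> real" and g :: "real^'d \<Rightarrow> real^'d"
  assumes S: "convex S"
    and der: "\<forall>x\<in>S. (\<psi> has_derivative (\<lambda>h. g x \<bullet> h)) (at x within S)"
    and lip: "\<forall>x\<in>S. \<forall>y\<in>S. norm (g x - g y) \<le> \<beta> * norm (x - y)"
    and xy: "x \<in> S" "y \<in> S"
  shows "\<psi> y \<le> \<psi> x + g x \<bullet> (y - x) + \<beta> / 2 * (norm (y - x))\<^sup>2"
proof -
  define v where "v = y - x"
  define p where "p = (\<lambda>s::real. x + s *\<^sub>R v)"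
  have pS: "p s \<in> S" if "s \<in> {0..1}" for s
  proof -
    have "p s = (1 - s) *\<^sub>R x + s *\<^sub>R y" by (simp add: p_def v_def algebra_simps)
    then show ?thesis using S xy that by (simp add: convex_def)
  qed
  define k where "k = (\<lambda>s. \<psi> (p s) - s * (g x \<bullet> v) - \<beta> / 2 * s\<^sup>2 * (norm v)\<^sup>2)"
  define k' where "k' = (\<lambda>s t::real. t * (g (p s) \<bullet> v) - t * (g x \<bullet> v) - \<beta> * s * t * (norm v)\<^sup>2)"
  have dk: "(k has_derivative k' s) (at s within {0..1})" if s: "0 \<le> s" "s \<le> 1" for s
  proof -
    have dp: "(p has_derivative (\<lambda>t. t *\<^sub>R v)) (at s within {0..1})"
      unfolding p_def by (auto intro!: derivative_eq_intros)
    have "(\<psi> has_derivative (\<lambda>h. g (p s) \<bullet> h)) (at (p s) within S)"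
      using der pS s by auto
    then have "(\<psi> has_derivative (\<lambda>h. g (p s) \<bullet> h)) (at (p s) within p ` {0..1})"
      by (rule has_derivative_subset) (use pS in auto)
    from diff_chain_within[OF dp this]
    have d1: "((\<lambda>s. \<psi> (p s)) has_derivative (\<lambda>t. g (p s) \<bullet> (t *\<^sub>R v))) (at s within {0..1})"
      by (simp add: o_def)
    show ?thesis unfolding k_def k'_def
      by (rule derivative_eq_intros d1 | simp)+ (auto simp: algebra_simps power2_eq_square)
  qed
  obtain z where z: "z \<in> {0..1}" "k 1 - k 0 = k' z (1 - 0)"
    using mvt_very_simple[of 0 1 k k'] dk by auto
  have "k' z 1 = (g (p z) - g x) \<bullet> v - \<beta> * z * (norm v)\<^sup>2"
    by (simp add: k'_def inner_diff_left)
  also have "(g (p z) - g x) \<bullet> v \<le> norm (g (p z) - g x) * norm v"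
    by (rule norm_cauchy_schwarz)
  also have "norm (g (p z) - g x) \<le> \<beta> * norm (p z - x)"
    using lip pS z xy by auto
  also have "norm (p z - x) = z * norm v" using z by (simp add: p_def)
  finally have "k' z 1 \<le> 0" by (simp add: mult_right_mono power2_eq_square mult.assoc)
  then have "k 1 \<le> k 0" using z by simp
  then show ?thesis by (simp add: k_def p_def v_def)
qed


lemma convex_interval_meas:
  fixes \<phi> :: "real \<Rightarrow> real"
  assumes "convex_on {l..u} \<phi>"
  shows "(\<lambda>t. if t \<in> {l..u} then \<phi> t else 0) \<in> borel_measurable borel"
proof (rule measurable_discrete_difference[where X="{l,u}"])
  have "continuous_on {l<..<u} \<phi>"
    by (rule convex_on_continuous) (auto intro: convex_on_subset[OF assms])
  then show "(\<lambda>t. if t \<in> {l<..<u} then \<phi> t else 0) \<in> borel_measurable borel"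
    by (intro borel_measurable_continuous_on_if) auto
qed auto

lemma indep_integral:
  fixes Z :: "'w \<Rightarrow> 'a::topological_space" and h :: "'a \<Rightarrow> real"
  assumes P: "prob_space M" and Z: "Z \<in> borel_measurable M" and E: "E \<in> sets M"
    and h: "h \<in> borel_measurable borel" and p: "0 \<le> p"
    and eq: "\<forall>A\<in>sets borel. measure M {\<omega>\<in>space M. \<omega> \<in> E \<and> Z \<omega> \<in> A} = p * measure M {\<omega>\<in>space M. Z \<omega> \<in> A}"
  shows "(\<integral>\<omega>. indicator E \<omega> * h (Z \<omega>) \<partial>M) = p * (\<integral>\<omega>. h (Z \<omega>) \<partial>M)"
proof -
  interpret prob_space M by (rule P)
  define N where "N = density M (\<lambda>\<omega>. ennreal (indicator E \<omega>))"
  have Zm: "Z \<in> measurable N borel" unfolding N_def using Z by simp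
  have meq: "distr N borel Z = density (distr M borel Z) (\<lambda>_. ennreal p)"
  proof (rule measure_eqI)
    show "sets (distr N borel Z) = sets (density (distr M borel Z) (\<lambda>_. ennreal p))" by simp
    fix A assume A: "A \<in> sets (distr N borel Z)"
    then have A': "A \<in> sets borel" by simp
    have s1: "Z -` A \<inter> space M \<in> sets M" using Z A' by (simp add: measurable_sets)
    have "emeasure (distr N borel Z) A = emeasure N (Z -` A \<inter> space N)"
      using A' Zm by (simp add: emeasure_distr)
    also have "\<dots> = (\<integral>\<^sup>+ \<omega>. indicator E \<omega> * indicator (Z -` A \<inter> space M) \<omega> \<partial>M)"
      unfolding N_def using s1 E by (simp add: emeasure_density nn_integral_indicator ennreal_indicator)
    also have "\<dots> = (\<integral>\<^sup>+ \<omega>. indicator (E \<inter> (Z -` A \<inter> space M)) \<omega> \<partial>M)"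
      by (intro nn_integral_cong) (auto simp: indicator_def)
    also have "\<dots> = emeasure M (E \<inter> (Z -` A \<inter> space M))"
      using s1 E by (intro nn_integral_indicator) auto
    also have "E \<inter> (Z -` A \<inter> space M) = {\<omega>\<in>space M. \<omega> \<in> E \<and> Z \<omega> \<in> A}" by auto
    also have "emeasure M {\<omega>\<in>space M. \<omega> \<in> E \<and> Z \<omega> \<in> A} = ennreal (p * measure M {\<omega>\<in>space M. Z \<omega> \<in> A})"
      using eq A' by (simp add: emeasure_eq_measure)
    also have "\<dots> = ennreal p * emeasure (distr M borel Z) A"
      using A' Z p by (simp add: emeasure_distr emeasure_eq_measure ennreal_mult vimage_def Int_def conj_commute)
    also have "\<dots> = emeasure (density (distr M borel Z) (\<lambda>_. ennreal p)) A"
      using A' by (simp add: emeasure_density nn_integral_cmult_indicator)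
    finally show "emeasure (distr N borel Z) A = emeasure (density (distr M borel Z) (\<lambda>_. ennreal p)) A" .
  qed
  have "(\<integral>\<omega>. indicator E \<omega> * h (Z \<omega>) \<partial>M) = (\<integral>\<omega>. h (Z \<omega>) \<partial>N)"
  proof -
    have "(\<integral>\<omega>. h (Z \<omega>) \<partial>N) = (\<integral>\<omega>. indicator E \<omega> *\<^sub>R h (Z \<omega>) \<partial>M)"
      unfolding N_def by (rule integral_density) (use E h Z in auto)
    then show ?thesis by simp
  qed
  also have "\<dots> = integral\<^sup>L (distr N borel Z) h"
    using Zm h by (simp add: integral_distr)
  also have "\<dots> = integral\<^sup>L (density (distr M borel Z) (\<lambda>_. ennreal p)) h" by (simp add: meq)
  also have "\<dots> = integral\<^sup>L (distr M borel Z) (\<lambda>x. p *\<^sub>R h x)"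
    using h p by (subst integral_density) auto
  also have "\<dots> = (\<integral>\<omega>. p * h (Z \<omega>) \<partial>M)"
    using Z h by (simp add: integral_distr)
  also have "\<dots> = p * (\<integral>\<omega>. h (Z \<omega>) \<partial>M)" by simp
  finally show ?thesis .
qed


lemma upd_nth: "(x + c *\<^sub>R axis i (1::real)) $ j = x $ j + (if j = i then c else 0)"
  by (simp add: axis_def)

lemma key_pointwise:
  fixes \<psi> :: "real^'d \<Rightarrow> real" and g :: "real^'d \<Rightarrow> real^'d" and \<phi> :: "'d \<Rightarrow> real \<Rightarrow> real"
    and f :: "real^'d \<Rightarrow> real"
  assumes der: "\<forall>x\<in>cbox a b. (\<psi> has_derivative (\<lambda>h. g x \<bullet> h)) (at x within cbox a b)"
    and sc: "\<forall>x\<in>cbox a b. \<forall>y\<in>cbox a b. \<psi> y \<ge> \<psi> x + g x \<bullet> (y - x) + \<alpha> / 2 * (norm (y - x))\<^sup>2"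
    and lip: "\<forall>x\<in>cbox a b. \<forall>y\<in>cbox a b. norm (g x - g y) \<le> \<beta> * norm (x - y)"
    and conv: "\<forall>i. convex_on {a$i..b$i} (\<phi> i)"
    and feq: "\<forall>x\<in>cbox a b. f x = \<psi> x + (\<Sum>i\<in>UNIV. \<phi> i (x $ i))"
    and xs: "xstar \<in> cbox a b" and x: "x \<in> cbox a b"
    and ab: "0 < \<alpha>" "0 < \<beta>" "\<alpha> \<le> \<beta>"
  shows "(\<Sum>i\<in>UNIV. f (x + (\<alpha> / \<beta> * (xstar $ i - x $ i)) *\<^sub>R axis i 1))
          \<le> real CARD('d) * f x - \<alpha> / \<beta> * (f x - f xstar)"
proof -
  define \<theta> where "\<theta> = \<alpha> / \<beta>"
  have th: "0 \<le> \<theta>" "\<theta> \<le> 1" "\<beta> * \<theta> = \<alpha>" using ab by (auto simp: \<theta>_def)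
  define r where "r = xstar - x"
  define t where "t = (\<lambda>i. \<theta> * (r $ i))"
  define u where "u = (\<lambda>i. x + t i *\<^sub>R axis i (1::real))"
  define \<Phi> where "\<Phi> = (\<lambda>y::real^'d. \<Sum>i\<in>UNIV. \<phi> i (y $ i))"
  have xi: "x $ i \<in> {a$i..b$i}" "xstar $ i \<in> {a$i..b$i}" for i
    using x xs by (auto simp: mem_box_cart)
  have ui_i: "u i $ i = (1 - \<theta>) * x $ i + \<theta> * xstar $ i" for i
    by (simp add: u_def upd_nth t_def r_def algebra_simps)
  have conv_i: "(1 - \<theta>) * x $ i + \<theta> * xstar $ i \<in> {a$i..b$i}" for i
  proof -
    have "(1 - \<theta>) * a$i \<le> (1 - \<theta>) * x $ i" "\<theta> * a$i \<le> \<theta> * xstar $ i"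
         "(1 - \<theta>) * x$i \<le> (1 - \<theta>) * b $ i" "\<theta> * xstar$i \<le> \<theta> * b $ i"
      using xi[of i] th by (auto intro: mult_left_mono)
    then show ?thesis by (auto simp: algebra_simps)
  qed
  have uS: "u i \<in> cbox a b" for i
    unfolding mem_box_cart
  proof
    fix j show "a $ j \<le> u i $ j \<and> u i $ j \<le> b $ j"
    proof (cases "j = i")
      case True then show ?thesis using ui_i conv_i by auto
    next
      case False then show ?thesis using xi by (simp add: u_def axis_def)
    qed
  qed
  have fu: "f (u i) \<le> \<psi> x + t i * g x $ i + \<beta> / 2 * (t i)\<^sup>2 + \<Phi> x - \<phi> i (x $ i)
             + ((1 - \<theta>) * \<phi> i (x $ i) + \<theta> * \<phi> i (xstar $ i))" for i
  proof -
    have "\<psi> (u i) \<le> \<psi> x + g x \<bullet> (u i - x) + \<beta> / 2 * (norm (u i - x))\<^sup>2"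
      by (rule descent_lemma[OF convex_box(1) der lip x uS])
    also have "g x \<bullet> (u i - x) = t i * g x $ i" by (simp add: u_def inner_axis)
    also have "norm (u i - x) = \<bar>t i\<bar>" by (simp add: u_def)
    finally have p1: "\<psi> (u i) \<le> \<psi> x + t i * g x $ i + \<beta> / 2 * (t i)\<^sup>2" by simp
    have "\<Phi> (u i) = (\<Sum>j\<in>UNIV. \<phi> j (x $ j) + (if j = i then \<phi> i (u i $ i) - \<phi> i (x $ i) else 0))"
      unfolding \<Phi>_def by (intro sum.cong) (auto simp: u_def axis_def)
    also have "\<dots> = \<Phi> x + (\<phi> i (u i $ i) - \<phi> i (x $ i))"
      by (simp add: sum.distrib \<Phi>_def)
    finally have p2: "\<Phi> (u i) = \<Phi> x + (\<phi> i (u i $ i) - \<phi> i (x $ i))" .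
    have p3: "\<phi> i (u i $ i) \<le> (1 - \<theta>) * \<phi> i (x $ i) + \<theta> * \<phi> i (xstar $ i)"
      using convex_onD[OF conv[rule_format, of i], of \<theta> "x $ i" "xstar $ i"] th xi ui_i by simp
    have "f (u i) = \<psi> (u i) + \<Phi> (u i)" using feq uS by (simp add: \<Phi>_def)
    then show ?thesis using p1 p2 p3 by linarith
  qed
  have s1: "(\<Sum>i\<in>UNIV. t i * g x $ i) = \<theta> * (g x \<bullet> r)"
    by (simp add: t_def inner_vec_def sum_distrib_left algebra_simps)
  have s2: "(\<Sum>i\<in>UNIV. (t i)\<^sup>2) = \<theta>\<^sup>2 * (norm r)\<^sup>2"
  proof -
    have "(norm r)\<^sup>2 = (\<Sum>i\<in>UNIV. r $ i * r $ i)"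
      by (simp add: power2_norm_eq_inner inner_vec_def)
    then show ?thesis
      by (simp add: t_def sum_distrib_left power2_eq_square algebra_simps)
  qed
  have s3: "(\<Sum>i\<in>UNIV. (1 - \<theta>) * \<phi> i (x $ i) + \<theta> * \<phi> i (xstar $ i) - \<phi> i (x $ i)) = \<theta> * (\<Phi> xstar - \<Phi> x)"
    by (simp add: \<Phi>_def sum.distrib sum_subtractf sum_distrib_left algebra_simps)
  have "(\<Sum>i\<in>UNIV. f (u i)) \<le> (\<Sum>i\<in>UNIV. (\<psi> x + \<Phi> x) + t i * g x $ i + \<beta> / 2 * (t i)\<^sup>2
          + ((1 - \<theta>) * \<phi> i (x $ i) + \<theta> * \<phi> i (xstar $ i) - \<phi> i (x $ i)))"
    by (intro sum_mono) (use fu in \<open>auto simp: algebra_simps\<close>)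
  also have "\<dots> = real CARD('d) * (\<psi> x + \<Phi> x) + \<theta> * (g x \<bullet> r) + \<beta> / 2 * (\<theta>\<^sup>2 * (norm r)\<^sup>2)
       + \<theta> * (\<Phi> xstar - \<Phi> x)"
    by (simp add: sum.distrib s1 s3 s2[symmetric] sum_distrib_left)
  also have "\<dots> \<le> real CARD('d) * (\<psi> x + \<Phi> x) + \<theta> * ((\<psi> xstar + \<Phi> xstar) - (\<psi> x + \<Phi> x))"
  proof -
    have "\<psi> xstar \<ge> \<psi> x + g x \<bullet> r + \<alpha> / 2 * (norm r)\<^sup>2" using sc x xs by (simp add: r_def)
    then have "\<theta> * (g x \<bullet> r) \<le> \<theta> * (\<psi> xstar - \<psi> x - \<alpha> / 2 * (norm r)\<^sup>2)"
      using th by (intro mult_left_mono) auto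
    then have e1: "\<theta> * (g x \<bullet> r) \<le> \<theta> * \<psi> xstar - \<theta> * \<psi> x - \<theta> * (\<alpha> / 2 * (norm r)\<^sup>2)"
      by (simp add: right_diff_distrib)
    have e2: "\<beta> / 2 * (\<theta>\<^sup>2 * (norm r)\<^sup>2) = \<theta> * (\<alpha> / 2 * (norm r)\<^sup>2)"
      using th(3) by (simp add: power2_eq_square)
    have e3: "\<theta> * ((\<psi> xstar + \<Phi> xstar) - (\<psi> x + \<Phi> x)) = \<theta> * \<psi> xstar - \<theta> * \<psi> x + \<theta> * (\<Phi> xstar - \<Phi> x)"
      by (simp add: algebra_simps)
    show ?thesis unfolding e2 e3 using e1 by linarith
  qed
  also have "\<dots> = real CARD('d) * f x - \<theta> * (f x - f xstar)"
    using feq x xs by (simp add: \<Phi>_def algebra_simps)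
  finally show ?thesis by (simp add: u_def t_def r_def \<theta>_def)
qed

theorem lemma2:
  fixes M :: "'w measure"
    and f :: "real^'d \<Rightarrow> real"
    and a b x0 xstar :: "real^'d"
    and \<alpha> \<beta> \<epsilon>0 \<gamma> :: real
    and X :: "nat \<Rightarrow> 'w \<Rightarrow> real^'d"
    and I :: "nat \<Rightarrow> 'w \<Rightarrow> 'd"
  assumes P: "prob_space M"
    and box: "cbox a b \<noteq> {}"
    and ab: "0 < \<alpha>" "0 < \<beta>"
    and fF: "in_F \<alpha> \<beta> (cbox a b) f"
    and opt: "xstar \<in> cbox a b" "\<forall>y\<in>cbox a b. f xstar \<le> f y"
    and eps0: "\<epsilon>0 > 0"
    and gam: "sqrt (1 - \<alpha> / (real CARD('d) * \<beta>)) \<le> \<gamma>" "\<gamma> < 1"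
    and x0: "x0 \<in> cbox a b"
    and init: "\<forall>\<omega>\<in>space M. X 0 \<omega> = x0"
    and Xmeas: "\<forall>k. X k \<in> borel_measurable M"
    and Xint: "\<forall>k. integrable M (\<lambda>\<omega>. f (X k \<omega>))"
    and Xin: "\<forall>k. \<forall>\<omega>\<in>space M. X k \<omega> \<in> cbox a b"
    and Imeas: "\<forall>k. I k \<in> measurable M (count_space UNIV)"
    and Iunif: "\<forall>k\<ge>1. \<forall>i. measure M {\<omega> \<in> space M. I k \<omega> = i} = 1 / real CARD('d)"
    and Iindep: "\<forall>k\<ge>1. \<forall>i. \<forall>A\<in>sets borel.
        measure M {\<omega> \<in> space M. I k \<omega> = i \<and> X (k - 1) \<omega> \<in> A}
        = measure M {\<omega> \<in> space M. I k \<omega> = i} * measure M {\<omega> \<in> space M. X (k - 1) \<omega> \<in> A}"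
    and upd: "\<forall>k\<ge>1. \<forall>\<omega>\<in>space M. \<forall>j. j \<noteq> I k \<omega> \<longrightarrow> X k \<omega> $ j = X (k - 1) \<omega> $ j"
    and acc: "\<forall>k\<ge>1. AE \<omega> in M.
        real_cond_exp M
          (vimage_algebra (space M) (\<lambda>\<omega>. (X (k - 1) \<omega>, I k \<omega>)) (borel \<Otimes>\<^sub>M count_space UNIV))
          (\<lambda>\<omega>. f (X k \<omega>)) \<omega>
        \<le> coord_min f (cbox a b) (X (k - 1) \<omega>) (I k \<omega>) + \<epsilon>0 * \<gamma> ^ k"
  shows "\<forall>k. (\<integral>\<omega>. f (X k \<omega>) \<partial>M) - f xstar
           \<le> max (f x0 - f xstar) (\<epsilon>0 / (1 - \<gamma>)) * \<gamma> ^ k"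
proof -
  interpret prob_space M by (rule P)
  define S where "S = cbox a b"
  obtain \<psi> :: "real^'d \<Rightarrow> real" and g :: "real^'d \<Rightarrow> real^'d" and \<phi> :: "'d \<Rightarrow> real \<Rightarrow> real" where
    der: "\<forall>x\<in>cbox a b. (\<psi> has_derivative (\<lambda>h. g x \<bullet> h)) (at x within cbox a b)"
    and sc: "\<forall>x\<in>cbox a b. \<forall>y\<in>cbox a b. \<psi> y \<ge> \<psi> x + g x \<bullet> (y - x) + \<alpha> / 2 * (norm (y - x))\<^sup>2"
    and lip: "\<forall>x\<in>cbox a b. \<forall>y\<in>cbox a b. norm (g x - g y) \<le> \<beta> * norm (x - y)"
    and conv0: "\<forall>i. convex_on ((\<lambda>x. x $ i) ` cbox a b) (\<phi> i)"
    and feq: "\<forall>x\<in>cbox a b. f x = \<psi> x + (\<Sum>i\<in>UNIV. \<phi> i (x $ i))"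
    using fF unfolding in_F_def by blast
  obtain z0 where z0: "z0 \<in> cbox a b" using box by blast
  have conv: "\<forall>i. convex_on {a$i..b$i} (\<phi> i)"
  proof
    fix i
    have "{a$i..b$i} \<subseteq> (\<lambda>x. x $ i) ` cbox a b"
    proof
      fix s assume s: "s \<in> {a$i..b$i}"
      define w where "w = (\<chi> j. if j = i then s else z0 $ j)"
      have "w \<in> cbox a b" using s z0 by (auto simp: mem_box_cart w_def)
      moreover have "w $ i = s" by (simp add: w_def)
      ultimately show "s \<in> (\<lambda>x. x $ i) ` cbox a b" by force
    qed
    then show "convex_on {a$i..b$i} (\<phi> i)" using conv0 by (blast intro: convex_on_subset)
  qed
  have fstar: "\<And>y. y \<in> cbox a b \<Longrightarrow> f xstar \<le> f y" using opt by blast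
  have dpos: "real CARD('d) \<ge> 1" by simp
  have xin: "x $ i \<in> {a$i..b$i}" if "x \<in> cbox a b" for x i
    using that by (auto simp: mem_box_cart)
  have cont\<psi>: "continuous_on (cbox a b) \<psi>"
    using der by (auto simp: continuous_on_eq_continuous_within dest: has_derivative_continuous)
  define H where "H = (\<lambda>x::real^'d. (if x \<in> cbox a b then \<psi> x else 0)
      + (\<Sum>i\<in>UNIV. (\<lambda>t. if t \<in> {a$i..b$i} then \<phi> i t else 0) (x $ i)))"
  have Hf: "H x = f x" if "x \<in> cbox a b" for x
    using that feq xin by (simp add: H_def)
  have Hmeas: "H \<in> borel_measurable borel"
  proof -
    have m1: "(\<lambda>x::real^'d. if x \<in> cbox a b then \<psi> x else 0) \<in> borel_measurable borel"
      by (rule borel_measurable_continuous_on_if) (auto intro: cont\<psi> continuous_intros)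
    have m2: "(\<lambda>x::real^'d. (\<lambda>t. if t \<in> {a$i..b$i} then \<phi> i t else 0) (x $ i)) \<in> borel_measurable borel" for i
      by (rule measurable_compose[OF borel_measurable_nth convex_interval_meas[OF conv[rule_format]]])
    show ?thesis unfolding H_def using m1 m2 by measurable
  qed
  obtain B\<psi> where B\<psi>: "\<And>x. x \<in> cbox a b \<Longrightarrow> \<psi> x \<le> B\<psi>"
    using continuous_attains_sup[OF compact_cbox box cont\<psi>] by blast
  define B where "B = B\<psi> + (\<Sum>i\<in>UNIV. max (\<phi> i (a$i)) (\<phi> i (b$i)))"
  have fB: "f x \<le> B" if "x \<in> cbox a b" for x
  proof -
    have "(\<Sum>i\<in>UNIV. \<phi> i (x $ i)) \<le> (\<Sum>i\<in>UNIV. max (\<phi> i (a$i)) (\<phi> i (b$i)))"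
      by (intro sum_mono convex_on_le_max[OF conv[rule_format]] xin that)
    then show ?thesis using feq B\<psi> that by (simp add: B_def add_mono)
  qed
  define Bd where "Bd = \<bar>f xstar\<bar> + \<bar>B\<bar>"
  have Hbd: "\<bar>H x\<bar> \<le> Bd" if "x \<in> cbox a b" for x
    using Hf[OF that] fB[OF that] fstar[OF that] unfolding Bd_def by linarith
  define \<theta> where "\<theta> = min 1 (\<alpha> / \<beta>)"
  have th: "0 \<le> \<theta>" "\<theta> \<le> 1" using ab by (auto simp: \<theta>_def)
  define upd where "upd = (\<lambda>(x::real^'d) i. x + (\<theta> * (xstar $ i - x $ i)) *\<^sub>R axis i (1::real))"
  have upd_nth: "upd x i $ j = (if j = i then (1 - \<theta>) * x $ i + \<theta> * xstar $ i else x $ j)" for x i j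
    by (simp add: upd_def axis_def algebra_simps)
  have updS: "upd x i \<in> cbox a b" if x: "x \<in> cbox a b" for x i
    unfolding mem_box_cart
  proof
    fix j
    have xi: "x $ i \<in> {a$i..b$i}" "xstar $ i \<in> {a$i..b$i}" using x opt(1) xin by auto
    have "(1 - \<theta>) * a$i \<le> (1 - \<theta>) * x $ i" "\<theta> * a$i \<le> \<theta> * xstar $ i"
         "(1 - \<theta>) * x$i \<le> (1 - \<theta>) * b $ i" "\<theta> * xstar$i \<le> \<theta> * b $ i"
      using xi th by (auto intro: mult_left_mono)
    then have "a$i \<le> (1 - \<theta>) * x $ i + \<theta> * xstar $ i \<and> (1 - \<theta>) * x $ i + \<theta> * xstar $ i \<le> b$i"
      by (auto simp: algebra_simps)
    then show "a $ j \<le> upd x i $ j \<and> upd x i $ j \<le> b $ j"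
      using x by (auto simp: upd_nth mem_box_cart)
  qed
  have upd_meas: "(\<lambda>x. upd x i) \<in> borel_measurable borel" for i
    unfolding upd_def by measurable
  define d where "d = real CARD('d)"
  have d1: "d \<ge> 1" by (simp add: d_def)
  have single: "x = xstar" if "\<beta> < \<alpha>" "x \<in> cbox a b" for x
  proof -
    have "\<alpha> * (norm (x - xstar))\<^sup>2 \<le> (g x - g xstar) \<bullet> (x - xstar)"
    proof -
      have "\<psi> x \<ge> \<psi> xstar + g xstar \<bullet> (x - xstar) + \<alpha> / 2 * (norm (x - xstar))\<^sup>2"
        using sc that opt(1) by blast
      moreover have "\<psi> xstar \<ge> \<psi> x + g x \<bullet> (xstar - x) + \<alpha> / 2 * (norm (xstar - x))\<^sup>2"
        using sc that opt(1) by blast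
      moreover have "norm (xstar - x) = norm (x - xstar)" by (rule norm_minus_commute)
      moreover have "g x \<bullet> (xstar - x) = - (g x \<bullet> (x - xstar))" by (simp add: inner_diff_right)
      ultimately show ?thesis by (simp add: inner_diff_left)
    qed
    also have "\<dots> \<le> norm (g x - g xstar) * norm (x - xstar)" by (rule norm_cauchy_schwarz)
    also have "\<dots> \<le> \<beta> * norm (x - xstar) * norm (x - xstar)"
      using lip that opt(1) by (intro mult_right_mono) auto
    finally have "(\<alpha> - \<beta>) * (norm (x - xstar))\<^sup>2 \<le> 0" by (simp add: power2_eq_square algebra_simps)
    then have "(norm (x - xstar))\<^sup>2 \<le> 0" using that(1)
      by (simp add: mult_le_0_iff)
    then show ?thesis by simp
  qed
  have pw: "(\<Sum>i\<in>UNIV. f (upd x i)) / d \<le> f xstar + \<gamma>\<^sup>2 * (f x - f xstar)" if x: "x \<in> cbox a b" for x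
  proof (cases "\<alpha> \<le> \<beta>")
    case True
    then have thv: "\<theta> = \<alpha> / \<beta>" using ab by (simp add: \<theta>_def)
    have "(\<Sum>i\<in>UNIV. f (upd x i)) \<le> d * f x - \<alpha> / \<beta> * (f x - f xstar)"
      using key_pointwise[OF der sc lip conv feq opt(1) x ab True] unfolding upd_def thv d_def .
    then have "(\<Sum>i\<in>UNIV. f (upd x i)) / d \<le> (d * f x - \<alpha> / \<beta> * (f x - f xstar)) / d"
      using d1 by (simp add: divide_right_mono)
    also have "\<dots> = f x - (\<alpha> / \<beta> * (f x - f xstar)) / d"
      using d1 by (simp add: diff_divide_distrib)
    also have "\<dots> = f xstar + (1 - \<alpha> / (d * \<beta>)) * (f x - f xstar)"
    proof -
      have "(\<alpha> / \<beta> * (f x - f xstar)) / d = \<alpha> / (d * \<beta>) * (f x - f xstar)"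
        by (simp add: mult.commute)
      then show ?thesis by (simp add: algebra_simps)
    qed
    also have "\<dots> \<le> f xstar + \<gamma>\<^sup>2 * (f x - f xstar)"
    proof -
      have u0: "0 \<le> 1 - \<alpha> / (d * \<beta>)"
      proof -
        have "1 * \<beta> \<le> d * \<beta>" using d1 ab by (intro mult_right_mono) auto
        then have "\<alpha> \<le> d * \<beta>" using True by simp
        moreover have "0 < d * \<beta>" using d1 ab by simp
        ultimately have "\<alpha> / (d * \<beta>) \<le> 1" by (simp add: divide_le_eq)
        then show ?thesis by simp
      qed
      have "sqrt (1 - \<alpha> / (d * \<beta>)) \<le> \<gamma>" using gam(1) by (simp add: d_def)
      then have "(sqrt (1 - \<alpha> / (d * \<beta>)))\<^sup>2 \<le> \<gamma>\<^sup>2" using u0 by (intro power_mono) auto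
      then have "1 - \<alpha> / (d * \<beta>) \<le> \<gamma>\<^sup>2" using u0 by simp
      then show ?thesis using fstar[OF x] by (intro add_left_mono mult_right_mono) auto
    qed
    finally show ?thesis .
  next
    case False
    then have "x = xstar" "\<And>i. upd x i = xstar" using single x updS by auto
    then show ?thesis using d1 by (simp add: d_def)
  qed
  have Bd0: "0 \<le> Bd" by (simp add: Bd_def)
  have rec: "(\<integral>\<omega>. f (X (Suc m) \<omega>) \<partial>M) \<le> f xstar + \<gamma>\<^sup>2 * ((\<integral>\<omega>. f (X m \<omega>) \<partial>M) - f xstar) + \<epsilon>0 * \<gamma> ^ Suc m" for m
  proof -
    define Z where "Z = X m"
    define J where "J = I (Suc m)"
    have Zm[measurable]: "Z \<in> borel_measurable M" using Xmeas by (simp add: Z_def)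
    have Jm[measurable]: "J \<in> measurable M (count_space UNIV)" using Imeas by (simp add: J_def)
    have ZS: "Z \<omega> \<in> cbox a b" if "\<omega> \<in> space M" for \<omega> using Xin that by (simp add: Z_def)
    define F where "F = vimage_algebra (space M) (\<lambda>\<omega>. (Z \<omega>, J \<omega>)) (borel \<Otimes>\<^sub>M count_space UNIV)"
    have pm: "(\<lambda>\<omega>. (Z \<omega>, J \<omega>)) \<in> measurable M (borel \<Otimes>\<^sub>M count_space UNIV)" by measurable
    have sub: "subalgebra M F"
      unfolding subalgebra_def F_def using pm[unfolded measurable_iff_sets] by auto
    interpret fs: finite_measure_subalgebra M F by unfold_locales (rule sub)
    define c where "c = \<epsilon>0 * \<gamma> ^ Suc m"
    define E where "E = (\<lambda>i. {\<omega>\<in>space M. J \<omega> = i})"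
    have Em[measurable]: "E i \<in> sets M" for i unfolding E_def by measurable
    define G where "G = (\<lambda>\<omega>. \<Sum>i\<in>UNIV. indicator (E i) \<omega> * H (upd (Z \<omega>) i))"
    have accm: "AE \<omega> in M. real_cond_exp M F (\<lambda>\<omega>. f (X (Suc m) \<omega>)) \<omega> \<le> coord_min f (cbox a b) (Z \<omega>) (J \<omega>) + c"
      using acc[rule_format, of "Suc m"] by (simp add: Z_def J_def c_def F_def)
    have cmG: "coord_min f (cbox a b) (Z \<omega>) (J \<omega>) \<le> G \<omega>" if \<omega>: "\<omega> \<in> space M" for \<omega>
    proof -
      have "G \<omega> = (\<Sum>i\<in>UNIV. if i = J \<omega> then H (upd (Z \<omega>) i) else 0)"
        unfolding G_def by (intro sum.cong) (auto simp: E_def \<omega>)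
      also have "\<dots> = H (upd (Z \<omega>) (J \<omega>))" by simp
      also have "\<dots> = f (upd (Z \<omega>) (J \<omega>))" using Hf updS ZS \<omega> by blast
      finally have Gv: "G \<omega> = f (upd (Z \<omega>) (J \<omega>))" .
      have mem: "upd (Z \<omega>) (J \<omega>) \<in> {y \<in> cbox a b. \<forall>j. j \<noteq> J \<omega> \<longrightarrow> y $ j = Z \<omega> $ j}"
        using updS ZS \<omega> by (auto simp: upd_nth)
      have bdd: "bdd_below (f ` {y \<in> cbox a b. \<forall>j. j \<noteq> J \<omega> \<longrightarrow> y $ j = Z \<omega> $ j})"
        using fstar by (auto intro!: bdd_belowI[where m="f xstar"])
      show ?thesis unfolding coord_min_def Gv
        by (rule cInf_lower) (use mem bdd in auto)
    qed
    have Hint: "integrable M (\<lambda>\<omega>. H (upd (Z \<omega>) i))" for i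
    proof (rule integrable_const_bound[where B=Bd])
      show "AE \<omega> in M. norm (H (upd (Z \<omega>) i)) \<le> Bd"
        using Hbd updS ZS by (auto intro!: AE_I2)
      show "(\<lambda>\<omega>. H (upd (Z \<omega>) i)) \<in> borel_measurable M"
        using Hmeas upd_meas by measurable
    qed
    have Hint2: "integrable M (\<lambda>\<omega>. indicator (E i) \<omega> * H (upd (Z \<omega>) i))" for i
      using integrable_mult_indicator[OF Em[of i] Hint[of i]] by simp
    have Gint: "integrable M G" unfolding G_def by (rule Bochner_Integration.integrable_sum) (rule Hint2)
    have CEint: "integrable M (real_cond_exp M F (\<lambda>\<omega>. f (X (Suc m) \<omega>)))"
      using Xint by (intro fs.real_cond_exp_int(1)) auto
    have "(\<integral>\<omega>. f (X (Suc m) \<omega>) \<partial>M) = (\<integral>\<omega>. real_cond_exp M F (\<lambda>\<omega>. f (X (Suc m) \<omega>)) \<omega> \<partial>M)"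
      using Xint by (intro fs.real_cond_exp_int(2)[symmetric]) auto
    also have "\<dots> \<le> (\<integral>\<omega>. G \<omega> + c \<partial>M)"
    proof (rule integral_mono_AE[OF CEint])
      show "integrable M (\<lambda>\<omega>. G \<omega> + c)" using Gint by auto
      show "AE \<omega> in M. real_cond_exp M F (\<lambda>\<omega>. f (X (Suc m) \<omega>)) \<omega> \<le> G \<omega> + c"
        using accm AE_space by eventually_elim (use cmG in force)
    qed
    also have "\<dots> = (\<integral>\<omega>. G \<omega> \<partial>M) + c"
      using Gint by (simp add: prob_space)
    finally have ch1: "(\<integral>\<omega>. f (X (Suc m) \<omega>) \<partial>M) \<le> (\<integral>\<omega>. G \<omega> \<partial>M) + c" .
    have "(\<integral>\<omega>. G \<omega> \<partial>M) = (\<Sum>i\<in>UNIV. (\<integral>\<omega>. indicator (E i) \<omega> * H (upd (Z \<omega>) i) \<partial>M))"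
      unfolding G_def by (rule Bochner_Integration.integral_sum) (rule Hint2)
    also have "\<dots> = (\<Sum>i\<in>UNIV. 1 / d * (\<integral>\<omega>. H (upd (Z \<omega>) i) \<partial>M))"
    proof (intro sum.cong refl)
      fix i
      show "(\<integral>\<omega>. indicator (E i) \<omega> * H (upd (Z \<omega>) i) \<partial>M) = 1 / d * (\<integral>\<omega>. H (upd (Z \<omega>) i) \<partial>M)"
      proof -
        have "(\<integral>\<omega>. indicator (E i) \<omega> * (\<lambda>x. H (upd x i)) (Z \<omega>) \<partial>M) = 1 / d * (\<integral>\<omega>. (\<lambda>x. H (upd x i)) (Z \<omega>) \<partial>M)"
        proof (rule indep_integral[OF P Zm Em])
          show "(\<lambda>x. H (upd x i)) \<in> borel_measurable borel"
            by (rule measurable_compose[OF upd_meas Hmeas])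
          show "0 \<le> 1 / d" using d1 by simp
          show "\<forall>A\<in>sets borel. measure M {\<omega> \<in> space M. \<omega> \<in> E i \<and> Z \<omega> \<in> A} = 1 / d * measure M {\<omega> \<in> space M. Z \<omega> \<in> A}"
          proof
            fix A :: "(real^'d) set" assume A: "A \<in> sets borel"
            have "{\<omega> \<in> space M. \<omega> \<in> E i \<and> Z \<omega> \<in> A} = {\<omega> \<in> space M. I (Suc m) \<omega> = i \<and> X (Suc m - 1) \<omega> \<in> A}"
              by (auto simp: E_def J_def Z_def)
            also have "measure M \<dots> = measure M {\<omega> \<in> space M. I (Suc m) \<omega> = i} * measure M {\<omega> \<in> space M. X (Suc m - 1) \<omega> \<in> A}"
              using spec[OF Iindep, of "Suc m"] A by simp
            also have "\<dots> = 1 / d * measure M {\<omega> \<in> space M. Z \<omega> \<in> A}"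
              using Iunif by (simp add: d_def Z_def)
            finally show "measure M {\<omega> \<in> space M. \<omega> \<in> E i \<and> Z \<omega> \<in> A} = 1 / d * measure M {\<omega> \<in> space M. Z \<omega> \<in> A}" .
          qed
        qed
        then show ?thesis by simp
      qed
    qed
    also have "\<dots> = (\<integral>\<omega>. (\<Sum>i\<in>UNIV. H (upd (Z \<omega>) i)) / d \<partial>M)"
    proof -
      have "(\<integral>\<omega>. (\<Sum>i\<in>UNIV. H (upd (Z \<omega>) i)) \<partial>M) = (\<Sum>i\<in>UNIV. (\<integral>\<omega>. H (upd (Z \<omega>) i) \<partial>M))"
        by (rule Bochner_Integration.integral_sum) (rule Hint)
      moreover have "(\<integral>\<omega>. (\<Sum>i\<in>UNIV. H (upd (Z \<omega>) i)) / d \<partial>M) = (\<integral>\<omega>. (\<Sum>i\<in>UNIV. H (upd (Z \<omega>) i)) \<partial>M) / d"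
        by (rule integral_divide_zero)
      ultimately show ?thesis by (simp add: sum_divide_distrib)
    qed
    also have "\<dots> \<le> (\<integral>\<omega>. f xstar + \<gamma>\<^sup>2 * (f (Z \<omega>) - f xstar) \<partial>M)"
    proof (rule integral_mono)
      show "integrable M (\<lambda>\<omega>. (\<Sum>i\<in>UNIV. H (upd (Z \<omega>) i)) / d)"
        using Bochner_Integration.integrable_sum[of UNIV M "\<lambda>i \<omega>. H (upd (Z \<omega>) i)", OF Hint] by simp
      show "integrable M (\<lambda>\<omega>. f xstar + \<gamma>\<^sup>2 * (f (Z \<omega>) - f xstar))"
        using Xint by (simp add: Z_def)
      fix \<omega> assume \<omega>: "\<omega> \<in> space M"
      have "(\<Sum>i\<in>UNIV. H (upd (Z \<omega>) i)) = (\<Sum>i\<in>UNIV. f (upd (Z \<omega>) i))"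
        using Hf updS ZS \<omega> by (intro sum.cong) auto
      then show "(\<Sum>i\<in>UNIV. H (upd (Z \<omega>) i)) / d \<le> f xstar + \<gamma>\<^sup>2 * (f (Z \<omega>) - f xstar)"
        using pw[OF ZS[OF \<omega>]] by simp
    qed
    also have "\<dots> = f xstar + \<gamma>\<^sup>2 * ((\<integral>\<omega>. f (X m \<omega>) \<partial>M) - f xstar)"
      using Xint by (simp add: Z_def prob_space)
    finally have ch2: "(\<integral>\<omega>. G \<omega> \<partial>M) \<le> f xstar + \<gamma>\<^sup>2 * ((\<integral>\<omega>. f (X m \<omega>) \<partial>M) - f xstar)" .
    show ?thesis using ch1 ch2 by (simp add: c_def)
  qed
  have intX: "(\<integral>\<omega>. f (X k \<omega>) \<partial>M) = f xstar" if ba: "\<beta> < \<alpha>" for k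
  proof -
    have "(\<integral>\<omega>. f (X k \<omega>) \<partial>M) = (\<integral>\<omega>. f xstar \<partial>M)"
    proof (rule Bochner_Integration.integral_cong[OF refl])
      fix \<omega> assume "\<omega> \<in> space M"
      then have "X k \<omega> \<in> cbox a b" using Xin by blast
      then have "X k \<omega> = xstar" by (rule single[OF ba])
      then show "f (X k \<omega>) = f xstar" by simp
    qed
    then show ?thesis by (simp add: prob_space)
  qed
  have g0: "0 \<le> \<gamma>"
  proof (cases "\<alpha> \<le> \<beta>")
    case True
    have "1 * \<beta> \<le> d * \<beta>" using d1 ab by (intro mult_right_mono) auto
    then have "\<alpha> \<le> d * \<beta>" using True by simp
    moreover have "0 < d * \<beta>" using d1 ab by simp
    ultimately have "\<alpha> / (d * \<beta>) \<le> 1" by (simp add: divide_le_eq)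
    then have "0 \<le> sqrt (1 - \<alpha> / (d * \<beta>))" by simp
    moreover have "sqrt (1 - \<alpha> / (d * \<beta>)) \<le> \<gamma>" using gam(1) by (simp add: d_def)
    ultimately show ?thesis by linarith
  next
    case False
    then have "\<beta> < \<alpha>" by simp
    from rec[of 0] intX[OF this] have "0 \<le> \<epsilon>0 * \<gamma>" by simp
    then show ?thesis using eps0 by (simp add: zero_le_mult_iff)
  qed
  define F0 where "F0 = max (f x0 - f xstar) (\<epsilon>0 / (1 - \<gamma>))"
  have F0a: "f x0 - f xstar \<le> F0" by (simp add: F0_def)
  have F0b: "\<epsilon>0 \<le> (1 - \<gamma>) * F0"
  proof -
    have "\<epsilon>0 / (1 - \<gamma>) \<le> F0" by (simp add: F0_def)
    then show ?thesis using gam(2) by (simp add: divide_le_eq mult.commute)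
  qed
  have int0: "(\<integral>\<omega>. f (X 0 \<omega>) \<partial>M) = f x0"
  proof -
    have "(\<integral>\<omega>. f (X 0 \<omega>) \<partial>M) = (\<integral>\<omega>. f x0 \<partial>M)"
      using init by (intro Bochner_Integration.integral_cong) auto
    then show ?thesis by (simp add: prob_space)
  qed
  have main: "(\<integral>\<omega>. f (X k \<omega>) \<partial>M) - f xstar \<le> F0 * \<gamma> ^ k" for k
  proof (induction k)
    case 0
    then show ?case using int0 F0a by simp
  next
    case (Suc m)
    have "(\<integral>\<omega>. f (X (Suc m) \<omega>) \<partial>M) - f xstar \<le> \<gamma>\<^sup>2 * ((\<integral>\<omega>. f (X m \<omega>) \<partial>M) - f xstar) + \<epsilon>0 * \<gamma> ^ Suc m"
      using rec[of m] by simp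
    also have "\<dots> \<le> \<gamma>\<^sup>2 * (F0 * \<gamma> ^ m) + \<epsilon>0 * \<gamma> ^ Suc m"
      using Suc.IH by (intro add_right_mono mult_left_mono) auto
    also have "\<dots> = \<gamma> ^ Suc m * (\<gamma> * F0 + \<epsilon>0)"
      by (simp add: power2_eq_square algebra_simps)
    also have "\<dots> \<le> \<gamma> ^ Suc m * F0"
      using F0b g0 by (intro mult_left_mono) (auto simp: algebra_simps)
    finally show ?case by (simp add: mult.commute)
  qed
  show ?thesis using main by (simp add: F0_def)
qed

end
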